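(* There exists an invertible $21\times21$ binary matrix such that the corresponding linear kernel has partial distance sequence $(1,2,2,2,2,2,4,4,4,4,4,4,8,8,8,8,8,8,12,12,12)$. Consequently $E_{21}\ge\frac1{21}\sum_{i=0}^{20}\log_{21}D_{min}^{(i)}\approx0.49604$.
   Context: A kernel of dimension $\ell$ is a bijection $g:\{0,1\}^\ell\to\{0,1\}^\ell$; a linear kernel is $g({\bf u})={\bf u}G$ over $\mathbb{F}_2$ for an invertible $\ell\times\ell$ binary matrix $G$. ${\bf a}\bullet{\bf b}$ denotes concatenation, $d_H$ Hamming distance. Partial distances: $D_{min}^{(i)}=\min\{d_H(g({\bf w}\bullet 0\bullet{\bf u}),g({\bf w}\bullet 1\bullet {\bf v})) : {\bf w}\in\{0,1\}^i,\ {\bf u},{\bf v}\in\{0,1\}^{\ell-i-1}\}$, $i=0,\dots,\ell-1$; exponent $E(g)=\frac1\ell\sum_{i}\log_\ell D_{min}^{(i)}$; $E_\ell=\max_g E(g)$ over all kernels of dimension $\ell$. *)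

theory Defs
  imports Complex_Main
begin

text \<open>Binary vectors of length l are bool lists of length l (True = 1).\<close>

definition words :: "nat \<Rightarrow> bool list set" where
  "words l = {xs. length xs = l}"

definition hdist :: "bool list \<Rightarrow> bool list \<Rightarrow> nat" where
  "hdist xs ys = card {i. i < length xs \<and> xs ! i \<noteq> ys ! i}"

definition is_kernel :: "nat \<Rightarrow> (bool list \<Rightarrow> bool list) \<Rightarrow> bool" where
  "is_kernel l g \<longleftrightarrow> bij_betw g (words l) (words l)"

text \<open>Binary l x l matrices as functions (row, column) with indices below l;
  arithmetic over F_2 (sum = parity).\<close>
definition bmat_mult :: "nat \<Rightarrow> (nat \<Rightarrow> nat \<Rightarrow> bool) \<Rightarrow> (nat \<Rightarrow> nat \<Rightarrow> bool) \<Rightarrow> nat \<Rightarrow> nat \<Rightarrow> bool" where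
  "bmat_mult l A B i j = odd (card {k. k < l \<and> A i k \<and> B k j})"

definition binvertible :: "nat \<Rightarrow> (nat \<Rightarrow> nat \<Rightarrow> bool) \<Rightarrow> bool" where
  "binvertible l G \<longleftrightarrow> (\<exists>H. \<forall>i<l. \<forall>j<l.
      bmat_mult l G H i j = (i = j) \<and> bmat_mult l H G i j = (i = j))"

definition lin_kernel :: "nat \<Rightarrow> (nat \<Rightarrow> nat \<Rightarrow> bool) \<Rightarrow> bool list \<Rightarrow> bool list" where
  "lin_kernel l G u = map (\<lambda>j. odd (card {i. i < l \<and> u ! i \<and> G i j})) [0..<l]"

definition partial_dist :: "nat \<Rightarrow> (bool list \<Rightarrow> bool list) \<Rightarrow> nat \<Rightarrow> nat" where
  "partial_dist l g i = Min {hdist (g (w @ False # u)) (g (w @ True # v)) | w u v.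
      length w = i \<and> length u = l - i - 1 \<and> length v = l - i - 1}"

definition kernel_exponent :: "nat \<Rightarrow> (bool list \<Rightarrow> bool list) \<Rightarrow> real" where
  "kernel_exponent l g = (1 / real l) * (\<Sum>i<l. log (real l) (real (partial_dist l g i)))"

definition E_opt :: "nat \<Rightarrow> real" where
  "E_opt l = Max {kernel_exponent l g | g. is_kernel l g}"

definition pd_seq :: "nat list" where
  "pd_seq = [1,2,2,2,2,2,4,4,4,4,4,4,8,8,8,8,8,8,12,12,12]"

end

theory Submission
  imports Defs
begin


fun xorl :: "bool list \<Rightarrow> bool list \<Rightarrow> bool list" where
 "xorl (a#as) (b#bs) = (a \<noteq> b) # xorl as bs"
| "xorl _ _ = []"
fun cnt :: "bool list \<Rightarrow> nat" where
 "cnt [] = 0" | "cnt (a#as) = (if a then Suc (cnt as) else cnt as)"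
fun lc :: "nat \<Rightarrow> bool list list \<Rightarrow> bool list \<Rightarrow> bool list" where
 "lc n (r#rs) (b#bs) = (if b then xorl r (lc n rs bs) else lc n rs bs)"
| "lc n _ _ = replicate n False"
fun wvecs :: "nat \<Rightarrow> nat \<Rightarrow> bool list list" where
 "wvecs 0 k = (if k = 0 then [[]] else [])"
| "wvecs (Suc n) k = map (Cons False) (wvecs n k) @ (if k = 0 then [] else map (Cons True) (wvecs n (k - 1)))"
fun chk :: "nat \<Rightarrow> bool list \<Rightarrow> bool list list \<Rightarrow> bool" where
 "chk d acc [] = (cnt acc = 0 \<or> d \<le> cnt acc)"
| "chk d acc (r#rs) = (chk d acc rs \<and> chk d (xorl r acc) rs)"
definition idm :: "nat \<Rightarrow> bool list list" where
 "idm n = map (\<lambda>i. map (\<lambda>j. i = j) [0..<n]) [0..<n]"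

lemma replicate_num: "replicate (numeral k) x = x # replicate (pred_numeral k) x"
  by (simp add: numeral_eq_Suc)
lemma wvecs_num: "wvecs (numeral n) k = map (Cons False) (wvecs (pred_numeral n) k) @ (if k = 0 then [] else map (Cons True) (wvecs (pred_numeral n) (k - 1)))"
  by (simp add: numeral_eq_Suc)

lemma xorl_length[simp]: "length (xorl a b) = min (length a) (length b)"
  by (induction a b rule: xorl.induct) auto

lemma xorl_nth: "j < length a \<Longrightarrow> j < length b \<Longrightarrow> xorl a b ! j = (a!j \<noteq> b!j)"
  by (induction a b arbitrary: j rule: xorl.induct) (auto simp: nth_Cons split: nat.split)

lemma card_front: "card {i. i < Suc m \<and> P i} = (if P 0 then 1 else 0) + card {i. i < m \<and> P (Suc i)}"
proof -
  have e: "{i. i < Suc m \<and> P i} = (if P 0 then {0} else {}) \<union> Suc ` {i. i < m \<and> P (Suc i)}"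
    by (auto simp: image_iff less_Suc_eq_0_disj)
  have "card (Suc ` {i. i < m \<and> P (Suc i)}) = card {i. i < m \<and> P (Suc i)}"
    by (rule card_image) simp
  then show ?thesis unfolding e by (auto simp: card_insert_if)
qed

lemma card_back: "card {i. i < Suc m \<and> P i} = card {i. i < m \<and> P i} + (if P m then 1 else 0)"
proof -
  have e: "{i. i < Suc m \<and> P i} = {i. i < m \<and> P i} \<union> (if P m then {m} else {})"
    by (auto simp: less_Suc_eq)
  show ?thesis unfolding e by (auto simp: card_insert_if)
qed

lemma odd_card_xor: "odd (card {i. i < (m::nat) \<and> (P i \<noteq> Q i)}) = (odd (card {i. i < m \<and> P i}) \<noteq> odd (card {i. i < m \<and> Q i}))"
  by (induction m) (auto simp: card_back)

lemma cnt_card: "cnt v = card {i. i < length v \<and> v!i}"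
  by (induction v) (auto simp: card_front)

lemma cnt_le: "cnt v \<le> length v"
  by (induction v) auto

lemma cnt_zero: "cnt v = 0 \<Longrightarrow> v = replicate (length v) False"
  by (induction v) (auto split: if_splits)

lemma cnt_rep[simp]: "cnt (replicate n False) = 0"
  by (induction n) auto

lemma cnt_xorl: "length a = length b \<Longrightarrow> odd (cnt (xorl a b)) = (odd (cnt a) \<noteq> odd (cnt b))"
  by (induction a b rule: list_induct2) auto

lemma xorl_rep: "length v = n \<Longrightarrow> xorl (replicate n False) v = v"
  by (induction v arbitrary: n) auto

lemma xorl_rep2: "length v = n \<Longrightarrow> xorl v (replicate n False) = v"
  by (induction v arbitrary: n) auto

lemma xorl_ac: "length a = n \<Longrightarrow> length b = n \<Longrightarrow> length c = n \<Longrightarrow>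
   xorl (xorl a b) c = xorl b (xorl a c)"
  by (rule nth_equalityI) (auto simp: xorl_nth)

lemma lc_length[simp]: "\<forall>r\<in>set rs. length r = n \<Longrightarrow> length (lc n rs x) = n"
  by (induction n rs x rule: lc.induct) auto

lemma lc_nth: "length x = length rs \<Longrightarrow> \<forall>r\<in>set rs. length r = n \<Longrightarrow> j < n \<Longrightarrow>
   lc n rs x ! j = odd (card {i. i < length rs \<and> x!i \<and> rs!i!j})"
proof (induction x rs rule: list_induct2)
  case Nil
  then show ?case by simp
next
  case (Cons b x r rs)
  then show ?case by (auto simp: card_front xorl_nth)
qed

lemma lc_xorl: "length a = length rs \<Longrightarrow> length b = length rs \<Longrightarrow> \<forall>r\<in>set rs. length r = n \<Longrightarrow>
   lc n rs (xorl a b) = xorl (lc n rs a) (lc n rs b)"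
proof (rule nth_equalityI)
  assume a: "length a = length rs" "length b = length rs" "\<forall>r\<in>set rs. length r = n"
  then show "length (lc n rs (xorl a b)) = length (xorl (lc n rs a) (lc n rs b))" by simp
  fix j assume j: "j < length (lc n rs (xorl a b))"
  then have jn: "j < n" using a by simp
  have s: "{i. i < length rs \<and> xorl a b ! i \<and> rs ! i ! j} = {i. i < length rs \<and> ((a!i \<and> rs!i!j) \<noteq> (b!i \<and> rs!i!j))}"
    using a by (auto simp: xorl_nth)
  have "lc n rs (xorl a b) ! j = odd (card {i. i < length rs \<and> xorl a b ! i \<and> rs ! i ! j})"
    using a jn by (intro lc_nth) auto
  also have "\<dots> = (odd (card {i. i < length rs \<and> a!i \<and> rs!i!j}) \<noteq> odd (card {i. i < length rs \<and> b!i \<and> rs!i!j}))"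
    unfolding s by (rule odd_card_xor)
  also have "\<dots> = xorl (lc n rs a) (lc n rs b) ! j"
    using a jn by (simp add: lc_nth xorl_nth)
  finally show "lc n rs (xorl a b) ! j = xorl (lc n rs a) (lc n rs b) ! j" .
qed

lemma lc_zero: "lc n rs (replicate m False) = replicate n False"
proof (induction rs arbitrary: m)
  case Nil then show ?case by simp
next
  case (Cons r rs) then show ?case by (cases m) auto
qed

lemma lc_zero_rows: "\<forall>r\<in>set rs. r = replicate n False \<Longrightarrow> lc n rs x = replicate n False"
  by (induction n rs x rule: lc.induct) (auto simp: xorl_rep)

lemma lc_prefix: "t \<le> length rs \<Longrightarrow> lc n rs (replicate t False @ z) = lc n (drop t rs) z"
proof (induction t arbitrary: rs)
  case 0 then show ?case by simp
next
  case (Suc t) then show ?case by (cases rs) auto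
qed

lemma lc_comp: "length x = length R \<Longrightarrow> \<forall>r\<in>set R. length r = m \<Longrightarrow> length S = m \<Longrightarrow>
   \<forall>s\<in>set S. length s = n \<Longrightarrow> lc n S (lc m R x) = lc n (map (lc n S) R) x"
proof (induction x R rule: list_induct2)
  case Nil then show ?case by (simp add: lc_zero)
next
  case (Cons b x r R)
  then show ?case by (auto simp: lc_xorl)
qed

lemma idm_nth: "i < n \<Longrightarrow> j < n \<Longrightarrow> idm n ! i ! j = (i = j)"
  by (simp add: idm_def)

lemma lc_id: "length x = n \<Longrightarrow> lc n (idm n) x = x"
proof (rule nth_equalityI)
  assume a: "length x = n"
  have l: "\<forall>r\<in>set (idm n). length r = n" by (auto simp: idm_def)
  then show "length (lc n (idm n) x) = length x" using a by simp
  fix j assume "j < length (lc n (idm n) x)"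
  then have j: "j < n" using l by simp
  have s: "{i. i < length (idm n) \<and> x ! i \<and> idm n ! i ! j} = (if x!j then {j} else {})"
    using j by (auto simp: idm_def)
  have "lc n (idm n) x ! j = odd (card {i. i < length (idm n) \<and> x ! i \<and> idm n ! i ! j})"
    using a j l by (intro lc_nth) (auto simp: idm_def)
  then show "lc n (idm n) x ! j = x ! j" unfolding s by simp
qed

lemma lc_even: "\<forall>r\<in>set rs. even (cnt r) \<and> length r = n \<Longrightarrow> even (cnt (lc n rs x))"
proof (induction n rs x rule: lc.induct)
  case (1 n r rs b bs)
  then have "length (lc n rs bs) = n" by (intro lc_length) auto
  moreover have "length r = n" "even (cnt r)" using "1.prems" by auto
  moreover have "even (cnt (lc n rs bs))" using 1 by auto
  ultimately show ?case using cnt_xorl[of r "lc n rs bs"] by auto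
qed auto

lemma wvecs_mem: "length c = n \<Longrightarrow> c \<in> set (wvecs n (cnt c))"
  by (induction c arbitrary: n) auto

lemma chk_ok: "length z = length rs \<Longrightarrow> chk d acc rs \<Longrightarrow> length acc = n \<Longrightarrow> \<forall>r\<in>set rs. length r = n \<Longrightarrow>
   cnt (xorl (lc n rs z) acc) = 0 \<or> d \<le> cnt (xorl (lc n rs z) acc)"
proof (induction z rs arbitrary: acc rule: list_induct2)
  case Nil then show ?case by (simp add: xorl_rep)
next
  case (Cons b z r rs)
  show ?case
  proof (cases b)
    case True
    have "xorl (lc n (r#rs) (b#z)) acc = xorl (lc n rs z) (xorl r acc)"
      using True Cons.prems Cons.hyps by (simp add: xorl_ac)
    moreover have "cnt (xorl (lc n rs z) (xorl r acc)) = 0 \<or> d \<le> cnt (xorl (lc n rs z) (xorl r acc))"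
      using Cons by simp
    ultimately show ?thesis by simp
  next
    case False then show ?thesis using Cons by simp
  qed
qed

lemma xorl_app: "length u = length v \<Longrightarrow> xorl (w @ False # u) (w @ True # v) = replicate (length w) False @ True # xorl u v"
  by (induction w) auto


definition RR :: "bool list list" where "RR = [[False,False,True,False,False,False,False,False,False,False,False,False,False,False,False,False,False,False,False,False,False],
  [False,False,False,False,False,False,False,False,False,False,False,True,False,False,False,False,False,False,False,True,False],
  [False,False,False,False,False,False,False,False,False,False,False,False,False,True,False,False,False,True,False,False,False],
  [False,False,False,False,False,False,False,False,False,False,False,False,False,True,True,False,False,False,False,False,False],
  [False,False,False,False,True,False,False,False,False,True,False,False,False,False,False,False,False,False,False,False,False],
  [False,False,False,False,True,False,False,False,False,False,False,True,False,False,False,False,False,False,False,False,False],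
  [False,False,False,False,False,False,False,True,False,False,True,True,False,False,False,False,False,True,False,False,False],
  [True,False,False,True,False,False,False,False,False,False,True,False,False,False,False,True,False,False,False,False,False],
  [False,False,False,True,False,False,False,False,False,True,False,False,True,False,False,False,False,False,True,False,False],
  [False,False,False,False,False,False,True,False,False,False,True,False,False,False,True,False,False,False,True,False,False],
  [False,False,False,False,False,False,False,False,False,False,False,False,False,False,True,False,True,False,False,True,True],
  [True,False,False,False,False,False,False,False,False,False,True,False,True,False,False,False,True,False,False,False,False],
  [False,False,False,True,False,False,False,True,False,False,False,True,False,False,False,True,True,True,True,True,False],
  [True,True,True,False,False,True,False,False,False,False,False,True,False,True,True,True,False,False,False,False,False],
  [True,True,False,False,False,True,True,False,False,True,False,False,False,False,True,False,False,True,False,True,False],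
  [False,False,False,False,False,False,False,False,True,False,True,False,True,False,True,True,True,False,True,True,False],
  [True,True,True,False,False,False,False,False,True,False,True,False,False,False,True,False,True,True,False,False,False],
  [False,False,False,False,False,False,True,False,False,True,True,True,True,False,True,False,False,False,False,True,True],
  [True,False,True,True,True,False,False,True,False,True,True,True,False,False,True,False,True,True,True,False,False],
  [False,True,False,True,True,True,False,False,True,False,True,True,True,False,False,True,False,True,True,True,False],
  [False,False,True,False,True,True,True,False,False,True,False,True,True,True,False,False,True,False,True,True,True]]"
definition HR :: "bool list list" where "HR = [[True,False,True,True,False,False,False,False,True,True,False,False,False,True,True,False,True,True,False,True,True],
  [True,True,False,True,False,True,False,True,True,False,True,True,True,True,True,True,True,True,True,False,False],
  [True,False,False,False,False,False,False,False,False,False,False,False,False,False,False,False,False,False,False,False,False],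
  [True,False,False,False,True,True,False,True,True,True,False,True,True,False,True,True,False,False,True,True,False],
  [True,False,True,False,True,False,True,False,True,False,True,False,True,True,True,False,False,True,False,False,False],
  [True,False,True,False,False,True,False,True,True,False,False,False,True,True,False,True,True,False,True,False,False],
  [True,False,True,True,True,True,False,False,True,True,True,True,False,True,True,False,True,False,False,True,True],
  [True,False,True,True,False,True,False,False,True,False,False,True,False,False,False,False,False,False,True,False,False],
  [True,True,False,True,True,True,True,False,True,True,False,True,False,False,True,False,True,True,True,False,True],
  [True,False,True,False,False,False,True,False,True,False,True,False,True,True,True,False,False,True,False,False,False],
  [True,True,False,False,False,False,True,False,False,True,False,False,False,False,True,True,False,False,True,True,False],
  [True,False,True,False,True,True,True,False,True,False,True,False,True,True,True,False,False,True,False,False,False],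
  [True,False,True,True,True,False,True,True,False,True,True,True,True,True,False,True,True,False,False,False,True],
  [True,True,True,True,True,False,True,False,False,True,True,True,True,True,False,True,False,True,False,True,False],
  [True,True,True,False,True,False,True,False,False,True,True,True,True,True,False,True,False,True,False,True,False],
  [True,True,True,True,True,True,True,False,False,True,False,True,True,True,True,False,True,True,False,True,True],
  [True,True,False,False,True,False,False,True,True,True,True,False,True,False,False,False,False,True,True,False,False],
  [True,True,False,True,True,False,True,False,False,True,True,True,True,True,False,True,False,True,False,True,False],
  [True,False,False,True,False,True,False,False,True,False,False,False,True,False,False,False,True,True,True,True,True],
  [True,True,True,False,True,True,True,False,True,False,True,False,True,True,True,False,False,True,False,False,False],
  [True,True,False,False,True,True,False,True,False,False,False,True,True,False,True,True,False,True,True,True,False]]"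
definition HT :: "bool list list" where "HT = [[False,True,False,True,True,False],
  [True,False,True,True,True,True],
  [False,False,True,True,False,True],
  [True,False,True,False,True,False],
  [True,True,True,False,False,False],
  [False,True,True,True,True,True],
  [True,True,False,False,False,True],
  [False,False,False,True,True,True],
  [False,True,True,False,False,True],
  [False,False,True,True,True,False],
  [True,False,False,True,True,False],
  [True,False,True,False,False,True],
  [True,False,False,False,False,False],
  [False,False,True,False,True,True],
  [False,True,False,False,True,True],
  [False,True,True,False,True,False],
  [False,True,False,False,False,False],
  [False,False,True,False,False,False],
  [False,False,False,True,False,False],
  [False,False,False,False,True,False],
  [False,False,False,False,False,True]]"

lemma lenRR: "length RR = 21" by (simp add: RR_def)
lemma rowsRR: "\<forall>r\<in>set RR. length r = 21" by (simp add: RR_def)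
lemma lenHR: "length HR = 21" by (simp add: HR_def)
lemma rowsHR: "\<forall>r\<in>set HR. length r = 21" by (simp add: HR_def)
lemma lenHT: "length HT = 21" by (simp add: HT_def)
lemma rowsHT: "\<forall>r\<in>set HT. length r = 6" by (simp add: HT_def)
lemma c1: "map (lc 21 HR) RR = idm 21" by (simp add: HR_def RR_def idm_def upt_rec replicate_num)
lemma c2: "map (lc 21 RR) HR = idm 21" by (simp add: HR_def RR_def idm_def upt_rec replicate_num)
lemma c3: "map (lc 6 HT) (drop 6 RR) = replicate 15 (replicate 6 False)" by (simp add: HT_def RR_def replicate_num)
lemma c4: "map cnt RR = pd_seq" by (simp add: RR_def pd_seq_def)
lemma c5: "\<forall>r\<in>set (drop 1 RR). even (cnt r) \<and> length r = 21" by (simp add: RR_def)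
lemma pdv: "i < 21 \<Longrightarrow> pd_seq ! i = (if i = 0 then 1 else if i < 6 then 2 else if i < 12 then 4 else if i < 18 then 8 else 12)"
  by (simp add: pd_seq_def less_Suc_eq numeral_eq_Suc) (elim disjE; simp)
lemma c6: "\<forall>c\<in>set (wvecs 21 2). lc 6 HT c \<noteq> replicate 6 False"
  by (simp add: HT_def replicate_num wvecs_num)
lemma c7: "chk 8 (replicate 21 False) (drop 12 RR)"
  by (simp add: RR_def replicate_num)
lemma c8: "chk 12 (replicate 21 False) (drop 18 RR)"
  by (simp add: RR_def replicate_num)

definition G0 :: "nat \<Rightarrow> nat \<Rightarrow> bool" where "G0 i j = RR ! i ! j"
definition HH :: "nat \<Rightarrow> nat \<Rightarrow> bool" where "HH i j = HR ! i ! j"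

lemma g_lc: "length x = 21 \<Longrightarrow> lin_kernel 21 G0 x = lc 21 RR x"
proof (rule nth_equalityI)
  assume x: "length x = 21"
  show "length (lin_kernel 21 G0 x) = length (lc 21 RR x)"
    using rowsRR by (simp add: lin_kernel_def)
  fix j assume "j < length (lin_kernel 21 G0 x)"
  then have j: "j < 21" by (simp add: lin_kernel_def)
  have "lc 21 RR x ! j = odd (card {i. i < length RR \<and> x ! i \<and> RR ! i ! j})"
    using x j rowsRR lenRR by (intro lc_nth) auto
  then show "lin_kernel 21 G0 x ! j = lc 21 RR x ! j"
    using j by (simp add: lin_kernel_def G0_def lenRR)
qed

lemma inv_RR: "length x = 21 \<Longrightarrow> lc 21 HR (lc 21 RR x) = x"
proof -
  assume x: "length x = 21"
  have "lc 21 HR (lc 21 RR x) = lc 21 (map (lc 21 HR) RR) x"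
    using x lenRR rowsRR lenHR rowsHR by (intro lc_comp) auto
  also have "\<dots> = x" unfolding c1 using x by (rule lc_id)
  finally show ?thesis .
qed

lemma hdist_cnt: "length a = length b \<Longrightarrow> hdist a b = cnt (xorl a b)"
proof -
  assume l: "length a = length b"
  have "{i. i < length (xorl a b) \<and> xorl a b ! i} = {i. i < length a \<and> a ! i \<noteq> b ! i}"
    using l by (auto simp: xorl_nth)
  then show ?thesis by (simp add: hdist_def cnt_card)
qed

lemma LB:
  assumes i: "i < 21" and z: "length z = 20 - i"
  shows "pd_seq ! i \<le> cnt (lc 21 RR (replicate i False @ True # z))"
proof -
  define x where "x = replicate i False @ True # z"
  define c where "c = lc 21 RR x"
  have lx: "length x = 21" using i z by (simp add: x_def)
  have lc: "length c = 21" using rowsRR by (simp add: c_def)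
  have cnz: "cnt c \<noteq> 0"
  proof
    assume "cnt c = 0"
    then have "c = replicate 21 False" using cnt_zero lc by metis
    then have "x = lc 21 HR (replicate 21 False)" using inv_RR[OF lx] by (simp add: c_def)
    then have "x = replicate 21 False" by (simp add: lc_zero)
    moreover have "x ! i" by (simp add: x_def nth_append)
    ultimately show False using i by simp
  qed
  have spl: "c = lc 21 (drop t RR) (replicate (i - t) False @ True # z)" if "t \<le> i" for t
  proof -
    have "x = replicate t False @ (replicate (i - t) False @ True # z)"
      using that by (simp add: x_def replicate_add[symmetric])
    then show ?thesis using that i lenRR by (simp add: c_def lc_prefix)
  qed
  have ev: "even (cnt c)" if "1 \<le> i"
    using spl[OF that] c5 by (simp add: lc_even)
  have two: "cnt c \<noteq> 2" if "6 \<le> i"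
  proof
    assume c2: "cnt c = 2"
    define z' where "z' = replicate (i - 6) False @ True # z"
    have cz: "c = lc 21 (drop 6 RR) z'" using spl[OF that] by (simp add: z'_def)
    have lz: "length z' = length (drop 6 RR)" using that i z lenRR by (simp add: z'_def)
    have "lc 6 HT c = lc 6 (map (lc 6 HT) (drop 6 RR)) z'"
      unfolding cz using lz rowsRR lenHT rowsHT by (intro lc_comp) (auto dest: in_set_dropD)
    also have "\<dots> = replicate 6 False" unfolding c3 by (rule lc_zero_rows) simp
    finally have "lc 6 HT c = replicate 6 False" .
    moreover have "c \<in> set (wvecs 21 2)" using wvecs_mem[OF lc] c2 by simp
    ultimately show False using c6 by blast
  qed
  have chkd: "cnt c = 0 \<or> d \<le> cnt c"
    if t: "t \<le> i" "t \<le> 21" and ch: "chk d (replicate 21 False) (drop t RR)" for t d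
  proof -
    define z' where "z' = replicate (i - t) False @ True # z"
    have cz: "c = lc 21 (drop t RR) z'" using spl[OF t(1)] by (simp add: z'_def)
    have lz: "length z' = length (drop t RR)" using t i z lenRR by (simp add: z'_def)
    have "cnt (xorl (lc 21 (drop t RR) z') (replicate 21 False)) = 0 \<or>
          d \<le> cnt (xorl (lc 21 (drop t RR) z') (replicate 21 False))"
      using lz ch rowsRR by (intro chk_ok) (auto dest: in_set_dropD)
    moreover have "xorl (lc 21 (drop t RR) z') (replicate 21 False) = c"
      using cz lc by (simp add: xorl_rep2)
    ultimately show ?thesis by simp
  qed
  have "pd_seq ! i \<le> cnt c"
  proof (cases "i = 0")
    case True then show ?thesis using cnz pdv[OF i] by simp
  next
    case False
    then have e: "even (cnt c)" using ev by simp
    show ?thesis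
    proof (cases "i < 6")
      case True then show ?thesis using False e cnz pdv[OF i] by presburger
    next
      case F6: False
      have n2: "cnt c \<noteq> 2" using two F6 by simp
      show ?thesis
      proof (cases "i < 12")
        case True then show ?thesis using F6 e cnz n2 pdv[OF i] by presburger
      next
        case F12: False
        have "8 \<le> cnt c" using chkd[of 12 8] c7 cnz F12 by simp
        then show ?thesis using F12 pdv[OF i] chkd[of 18 12] c8 cnz by auto
      qed
    qed
  qed
  then show ?thesis by (simp add: c_def x_def)
qed

lemma UB: "i < 21 \<Longrightarrow> cnt (lc 21 RR (replicate i False @ True # replicate (20 - i) False)) = pd_seq ! i"
proof -
  assume i: "i < 21"
  have d: "drop i RR = RR ! i # drop (Suc i) RR" using i lenRR by (simp add: Cons_nth_drop_Suc)
  have l: "length (RR ! i) = 21" using i lenRR rowsRR by (simp add: nth_mem)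
  have "lc 21 RR (replicate i False @ True # replicate (20 - i) False) = RR ! i"
    using i lenRR l by (simp add: lc_prefix d lc_zero xorl_rep2)
  moreover have "cnt (RR ! i) = pd_seq ! i" using i lenRR c4 by (metis nth_map)
  ultimately show ?thesis by simp
qed

lemma elem:
  assumes i: "i < 21" and w: "length w = i" and u: "length u = 20 - i" and v: "length v = 20 - i"
  shows "hdist (lin_kernel 21 G0 (w @ False # u)) (lin_kernel 21 G0 (w @ True # v))
       = cnt (lc 21 RR (replicate i False @ True # xorl u v))"
proof -
  have l1: "length (w @ False # u) = 21" "length (w @ True # v) = 21" using i w u v by auto
  have "hdist (lin_kernel 21 G0 (w @ False # u)) (lin_kernel 21 G0 (w @ True # v))
      = cnt (xorl (lc 21 RR (w @ False # u)) (lc 21 RR (w @ True # v)))"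
    using l1 rowsRR by (simp add: g_lc hdist_cnt)
  also have "\<dots> = cnt (lc 21 RR (xorl (w @ False # u) (w @ True # v)))"
    using l1 rowsRR lenRR by (simp add: lc_xorl)
  also have "\<dots> = cnt (lc 21 RR (replicate i False @ True # xorl u v))"
    using u v w by (simp add: xorl_app)
  finally show ?thesis .
qed

lemma pd_main: "i < 21 \<Longrightarrow> partial_dist 21 (lin_kernel 21 G0) i = pd_seq ! i"
proof -
  assume i: "i < 21"
  have e: "21 - i - 1 = 20 - i" by simp
  define S where "S = {hdist (lin_kernel 21 G0 (w @ False # u)) (lin_kernel 21 G0 (w @ True # v)) | w u v.
      length w = i \<and> length u = 21 - i - 1 \<and> length v = 21 - i - 1}"
  have mem: "\<And>y. y \<in> S \<Longrightarrow> \<exists>z. length z = 20 - i \<and> y = cnt (lc 21 RR (replicate i False @ True # z))"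
  proof -
    fix y assume "y \<in> S"
    then obtain w u v where "length w = i" "length u = 20 - i" "length v = 20 - i"
      "y = hdist (lin_kernel 21 G0 (w @ False # u)) (lin_kernel 21 G0 (w @ True # v))"
      unfolding S_def e by blast
    then show "\<exists>z. length z = 20 - i \<and> y = cnt (lc 21 RR (replicate i False @ True # z))"
      using i by (intro exI[of _ "xorl u v"]) (simp add: elem)
  qed
  have fin: "finite S"
  proof (rule finite_subset)
    show "S \<subseteq> {..21}"
    proof
      fix y assume "y \<in> S"
      then obtain z where "length z = 20 - i" "y = cnt (lc 21 RR (replicate i False @ True # z))"
        using mem by blast
      then show "y \<in> {..21}" using cnt_le[of "lc 21 RR (replicate i False @ True # z)"] rowsRR by simp
    qed
  qed simp
  have lb: "\<And>y. y \<in> S \<Longrightarrow> pd_seq ! i \<le> y" using mem LB[OF i] by blast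
  have "hdist (lin_kernel 21 G0 (replicate i False @ False # replicate (20 - i) False))
     (lin_kernel 21 G0 (replicate i False @ True # replicate (20 - i) False)) \<in> S"
    unfolding S_def e
    apply (rule CollectI)
    apply (rule exI[of _ "replicate i False"])
    apply (rule exI[of _ "replicate (20 - i) False"])
    apply (rule exI[of _ "replicate (20 - i) False"])
    by simp
  moreover have "hdist (lin_kernel 21 G0 (replicate i False @ False # replicate (20 - i) False))
     (lin_kernel 21 G0 (replicate i False @ True # replicate (20 - i) False)) = pd_seq ! i"
    using i by (simp add: elem xorl_rep UB)
  ultimately have "pd_seq ! i \<in> S" by simp
  then have "Min S = pd_seq ! i" using fin lb by (intro Min_eqI) auto
  then show ?thesis by (simp add: partial_dist_def S_def)
qed

lemma binv: "binvertible 21 G0"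
  unfolding binvertible_def
proof (intro exI[of _ HH] allI impI conjI)
  fix i j assume i: "i < (21::nat)" and j: "j < (21::nat)"
  have li: "length (RR ! i) = 21" using i lenRR rowsRR by (simp add: nth_mem)
  have "lc 21 HR (RR ! i) ! j = odd (card {k. k < length HR \<and> RR ! i ! k \<and> HR ! k ! j})"
    using li lenHR rowsHR j by (intro lc_nth) auto
  moreover have "lc 21 HR (RR ! i) ! j = idm 21 ! i ! j" using c1 i lenRR by (metis nth_map)
  ultimately show "bmat_mult 21 G0 HH i j = (i = j)"
    using i j by (simp add: bmat_mult_def G0_def HH_def lenHR idm_nth)
  have li': "length (HR ! i) = 21" using i lenHR rowsHR by (simp add: nth_mem)
  have "lc 21 RR (HR ! i) ! j = odd (card {k. k < length RR \<and> HR ! i ! k \<and> RR ! k ! j})"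
    using li' lenRR rowsRR j by (intro lc_nth) auto
  moreover have "lc 21 RR (HR ! i) ! j = idm 21 ! i ! j" using c2 i lenHR by (metis nth_map)
  ultimately show "bmat_mult 21 HH G0 i j = (i = j)"
    using i j by (simp add: bmat_mult_def G0_def HH_def lenRR idm_nth)
qed

lemma finite_words: "finite (words n)"
proof -
  have "words n = {xs. set xs \<subseteq> (UNIV::bool set) \<and> length xs = n}" by (simp add: words_def)
  then show ?thesis using finite_lists_length_eq[of "UNIV::bool set" n] by simp
qed

lemma kern0: "is_kernel 21 (lin_kernel 21 G0)"
proof -
  have inj: "inj_on (lin_kernel 21 G0) (words 21)"
  proof
    fix x y assume x: "x \<in> words 21" and y: "y \<in> words 21"
      and e: "lin_kernel 21 G0 x = lin_kernel 21 G0 y"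
    have lx: "length x = 21" and ly: "length y = 21" using x y by (auto simp: words_def)
    have "lc 21 RR x = lc 21 RR y" using e lx ly by (simp add: g_lc)
    then show "x = y" using inv_RR[OF lx] inv_RR[OF ly] by metis
  qed
  have sub: "lin_kernel 21 G0 ` words 21 \<subseteq> words 21" by (auto simp: words_def lin_kernel_def)
  have "lin_kernel 21 G0 ` words 21 = words 21" using endo_inj_surj[OF finite_words sub inj] .
  then show ?thesis using inj by (simp add: is_kernel_def bij_betw_def)
qed

lemma pd_le:
  assumes k: "is_kernel 21 g" and i: "i < 21"
  shows "partial_dist 21 g i \<le> 21"
proof -
  define S where "S = {hdist (g (w @ False # u)) (g (w @ True # v)) | w u v.
      length w = i \<and> length u = 21 - i - 1 \<and> length v = 21 - i - 1}"
  have gw: "\<And>x. length x = 21 \<Longrightarrow> length (g x) = 21"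
    using k unfolding is_kernel_def words_def by (auto dest: bij_betwE)
  have sub: "S \<subseteq> {..21}"
  proof
    fix y assume "y \<in> S"
    then obtain w u v where l: "length w = i" "length u = 21 - i - 1" "length v = 21 - i - 1"
      and y: "y = hdist (g (w @ False # u)) (g (w @ True # v))" unfolding S_def by blast
    have "length (g (w @ False # u)) = 21" using l i by (intro gw) auto
    moreover have "hdist a b \<le> length a" for a b
      unfolding hdist_def by (rule order_trans[OF card_mono[of "{..<length a}"]]) auto
    ultimately show "y \<in> {..21}" using y by (metis atMost_iff)
  qed
  have "hdist (g (replicate i False @ False # replicate (21 - i - 1) False))
     (g (replicate i False @ True # replicate (21 - i - 1) False)) \<in> S"
    unfolding S_def
    apply (rule CollectI)
    apply (rule exI[of _ "replicate i False"])
    apply (rule exI[of _ "replicate (21 - i - 1) False"])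
    apply (rule exI[of _ "replicate (21 - i - 1) False"])
    by simp
  then have ne: "S \<noteq> {}" by blast
  have "Min S \<in> S" using finite_subset[OF sub] ne by (intro Min_in) auto
  then show ?thesis using sub by (auto simp: partial_dist_def S_def)
qed

lemma ke_eq: "kernel_exponent 21 g = (1/21) * (\<Sum>i<21. log 21 (real (map (partial_dist 21 g) [0..<21] ! i)))"
  by (simp add: kernel_exponent_def)

theorem mainTheorem16:
  shows "(\<exists>G. binvertible 21 G \<and>
            (\<forall>i<21. partial_dist 21 (lin_kernel 21 G) i = pd_seq ! i))
         \<and> E_opt 21 \<ge> (1 / 21) * (\<Sum>i<21. log 21 (real (pd_seq ! i)))"
proof
  show "\<exists>G. binvertible 21 G \<and> (\<forall>i<21. partial_dist 21 (lin_kernel 21 G) i = pd_seq ! i)"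
    using binv pd_main by blast
  define K where "K = {kernel_exponent 21 g | g. is_kernel 21 g}"
  define F where "F = (\<lambda>ds::nat list. (1/21) * (\<Sum>i<21. log 21 (real (ds ! i))))"
  have "K \<subseteq> F ` {ds. set ds \<subseteq> {..21} \<and> length ds = 21}"
  proof
    fix y assume "y \<in> K"
    then obtain g where k: "is_kernel 21 g" and y: "y = kernel_exponent 21 g" unfolding K_def by blast
    have "y = F (map (partial_dist 21 g) [0..<21])" unfolding y F_def by (rule ke_eq)
    moreover have "set (map (partial_dist 21 g) [0..<21]) \<subseteq> {..21}" using pd_le[OF k] by auto
    ultimately show "y \<in> F ` {ds. set ds \<subseteq> {..21} \<and> length ds = 21}" by auto
  qed
  then have fin: "finite K"
    by (rule finite_subset) (intro finite_imageI finite_lists_length_eq; simp)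
  have v: "kernel_exponent 21 (lin_kernel 21 G0) = (1 / 21) * (\<Sum>i<21. log 21 (real (pd_seq ! i)))"
    unfolding kernel_exponent_def by (simp add: pd_main)
  have "kernel_exponent 21 (lin_kernel 21 G0) \<in> K" unfolding K_def using kern0 by blast
  then have "kernel_exponent 21 (lin_kernel 21 G0) \<le> Max K" using fin by (rule Max_ge[rotated])
  then show "E_opt 21 \<ge> (1 / 21) * (\<Sum>i<21. log 21 (real (pd_seq ! i)))"
    unfolding E_opt_def K_def[symmetric] using v by simp
qed

end
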